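(* Let $N\ge 3$, let $a>0$, $b>0$, and let $g:\mathbb{R}\to\mathbb{R}$ be continuous. A function $u\in C^2(\mathbb{R}^N)\cap\mathcal{D}^{1,2}(\mathbb{R}^N)$ is a solution of $$-\Big(a+b\int_{\mathbb{R}^N}|\nabla u|^2\Big)\Delta u=g(u)\quad\text{in }\mathbb{R}^N$$ if and only if there exist $v\in C^2(\mathbb{R}^N)\cap\mathcal{D}^{1,2}(\mathbb{R}^N)$ solving $$-\Delta v=g(v)\quad\text{in }\mathbb{R}^N$$ and $t>0$ such that $t^2a+t^{4-N}b\int_{\mathbb{R}^N}|\nabla v|^2=1$ and $u(x)=v(tx)$ for all $x\in\mathbb{R}^N$.
   Context: $\mathcal{D}^{1,2}(\mathbb{R}^N)$ denotes the completion of $C_c^\infty(\mathbb{R}^N)$ with respect to the norm $\left(\int_{\mathbb{R}^N}|\nabla u|^2\right)^{1/2}$. Solutions are understood in the classical (pointwise) sense. *)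

theory Defs
  imports "HOL-Analysis.Analysis"
begin

text \<open>Functions on R^N are modelled as maps real^'n \<Rightarrow> real, N = CARD('n).\<close>

definition dirline :: "('a::finite) \<Rightarrow> (real^'a \<Rightarrow> real) \<Rightarrow> real^'a \<Rightarrow> real \<Rightarrow> real" where
  "dirline i u x = (\<lambda>t. u (x + t *\<^sub>R axis i 1))"

definition partial :: "('a::finite) \<Rightarrow> (real^'a \<Rightarrow> real) \<Rightarrow> real^'a \<Rightarrow> real" where
  "partial i u x = deriv (dirline i u x) 0"

fun iterpartial :: "('a::finite) list \<Rightarrow> (real^'a \<Rightarrow> real) \<Rightarrow> real^'a \<Rightarrow> real" where
  "iterpartial [] u = u"
| "iterpartial (i # is) u = partial i (iterpartial is u)"

definition Ck :: "nat \<Rightarrow> (real^'a::finite \<Rightarrow> real) \<Rightarrow> bool" where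
  "Ck k u \<longleftrightarrow> (\<forall>is. length is \<le> k \<longrightarrow>
       continuous_on UNIV (iterpartial is u) \<and>
       (length is < k \<longrightarrow> (\<forall>i x. dirline i (iterpartial is u) x differentiable (at 0))))"

definition smooth :: "(real^'a::finite \<Rightarrow> real) \<Rightarrow> bool" where
  "smooth u \<longleftrightarrow> (\<forall>k. Ck k u)"

definition grad :: "(real^'a::finite \<Rightarrow> real) \<Rightarrow> real^'a \<Rightarrow> real^'a" where
  "grad u x = (\<chi> i. partial i u x)"

definition laplacian :: "(real^'a::finite \<Rightarrow> real) \<Rightarrow> real^'a \<Rightarrow> real" where
  "laplacian u x = (\<Sum>i\<in>UNIV. partial i (partial i u) x)"

definition dirichlet :: "(real^'a::finite \<Rightarrow> real) \<Rightarrow> real" where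
  "dirichlet u = (\<integral>x. (norm (grad u x))\<^sup>2 \<partial>lborel)"

text \<open>Membership in D^{1,2}(R^N) (N \<ge> 3): u is the limit of a Cauchy sequence (w.r.t. the
  Dirichlet norm) of C_c^\<infinity> functions, the completion being realised inside L^{2^*},
  2^* = 2N/(N-2), via the Sobolev embedding.\<close>
definition D12 :: "(real^'a::finite \<Rightarrow> real) \<Rightarrow> bool" where
  "D12 u \<longleftrightarrow> (\<exists>\<phi> :: nat \<Rightarrow> real^'a \<Rightarrow> real.
     (\<forall>k. smooth (\<phi> k) \<and> compact (closure {x. \<phi> k x \<noteq> 0})) \<and>
     (\<forall>e>0. \<exists>K. \<forall>k\<ge>K. \<forall>m\<ge>K.
        (\<integral>\<^sup>+x. ennreal ((norm (grad (\<phi> k) x - grad (\<phi> m) x))\<^sup>2) \<partial>lborel) < ennreal e) \<and>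
     ((\<lambda>k. \<integral>\<^sup>+x. ennreal (\<bar>\<phi> k x - u x\<bar> powr (2 * real CARD('a) / (real CARD('a) - 2))) \<partial>lborel)
        \<longlonglongrightarrow> 0))"

end

theory Submission imports Defs begin

lemma deriv_scale:
  fixes h :: "real \<Rightarrow> real"
  assumes "h differentiable (at 0)"
  shows "(\<lambda>t. c * h (s * t)) differentiable (at 0) \<and> deriv (\<lambda>t. c * h (s * t)) 0 = c * s * deriv h 0"
proof -
  have d: "DERIV h (s*0) :> deriv h 0" using assms DERIV_deriv_iff_real_differentiable by simp
  have "DERIV (\<lambda>t. s * t) 0 :> s" by (auto intro!: derivative_eq_intros)
  from DERIV_chain2[OF d this] have "DERIV (\<lambda>t. h (s*t)) 0 :> deriv h 0 * s" .
  then have D: "DERIV (\<lambda>t. c * h (s*t)) 0 :> c * (deriv h 0 * s)" by (rule DERIV_cmult)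
  then show ?thesis using DERIV_imp_deriv real_differentiable_def by (metis mult.assoc mult.commute) 
qed

lemma dirline_scale:
  "dirline i (\<lambda>x. c * w (s *\<^sub>R x)) x = (\<lambda>t. c * dirline i w (s *\<^sub>R x) (s * t))"
  by (simp add: dirline_def scaleR_add_right)

lemma iter_scale:
  assumes "\<forall>js. length js < length is \<longrightarrow> (\<forall>i x. dirline i (iterpartial js u) x differentiable (at 0))"
  shows "iterpartial is (\<lambda>x. u (s *\<^sub>R x)) = (\<lambda>x. s^length is * iterpartial is u (s *\<^sub>R x))"
  using assms
proof (induction "is")
  case Nil
  then show ?case by simp
next
  case (Cons i "is")
  have IH: "iterpartial is (\<lambda>x. u (s *\<^sub>R x)) = (\<lambda>x. s^length is * iterpartial is u (s *\<^sub>R x))"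
    using Cons.prems by (intro Cons.IH) auto
  have dif: "\<And>x. dirline i (iterpartial is u) x differentiable (at 0)" using Cons.prems by auto
  show ?case
  proof
    fix x
    have "iterpartial (i # is) (\<lambda>x. u (s *\<^sub>R x)) x = deriv (\<lambda>t. s^length is * dirline i (iterpartial is u) (s *\<^sub>R x) (s * t)) 0"
      by (simp add: IH partial_def dirline_scale)
    also have "\<dots> = s^length is * s * deriv (dirline i (iterpartial is u) (s *\<^sub>R x)) 0"
      using deriv_scale[OF dif] by blast
    finally show "iterpartial (i # is) (\<lambda>x. u (s *\<^sub>R x)) x = s ^ length (i # is) * iterpartial (i # is) u (s *\<^sub>R x)"
      by (simp add: partial_def mult.commute)
  qed
qed

lemma Ck_scale:
  assumes "Ck k u"
  shows "Ck k (\<lambda>x. u (s *\<^sub>R x))"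
  unfolding Ck_def
proof (intro allI impI conjI)
  fix "is" :: "'a list" assume len: "length is \<le> k"
  have H: "\<forall>js. length js < length is \<longrightarrow> (\<forall>i x. dirline i (iterpartial js u) x differentiable (at 0))"
    using assms len unfolding Ck_def by auto
  have E: "iterpartial is (\<lambda>x. u (s *\<^sub>R x)) = (\<lambda>x. s^length is * iterpartial is u (s *\<^sub>R x))"
    using iter_scale[OF H] .
  have c: "continuous_on UNIV (iterpartial is u)" using assms len unfolding Ck_def by auto
  show "continuous_on UNIV (iterpartial is (\<lambda>x. u (s *\<^sub>R x)))"
    unfolding E
    by (intro continuous_on_mult continuous_on_const continuous_on_compose2[OF c]) (auto intro: continuous_intros)
  fix i x assume "length is < k"
  then have "dirline i (iterpartial is u) (s *\<^sub>R x) differentiable (at 0)"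
    using assms len unfolding Ck_def by auto
  from deriv_scale[OF this, of "s^length is" s]
  show "dirline i (iterpartial is (\<lambda>x. u (s *\<^sub>R x))) x differentiable (at 0)"
    unfolding E dirline_scale by blast
qed

lemma nn_scale:
  fixes f :: "real^'n::finite \<Rightarrow> ennreal"
  assumes s: "s \<noteq> 0" and f: "f \<in> borel_measurable borel"
  shows "(\<integral>\<^sup>+x. f x \<partial>lborel) = ennreal (\<bar>s\<bar> ^ CARD('n)) * (\<integral>\<^sup>+x. f (s *\<^sub>R x) \<partial>lborel)"
proof -
  have "(\<integral>\<^sup>+x. f x \<partial>lborel) = (\<integral>\<^sup>+x. f x \<partial>density (distr lborel borel (\<lambda>x. 0 + s *\<^sub>R x)) (\<lambda>_. \<bar>s\<bar>^DIM(real^'n)))"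
    using lborel_affine[OF s, of "0::real^'n"] by simp
  also have "\<dots> = (\<integral>\<^sup>+x. ennreal (\<bar>s\<bar>^CARD('n)) * f x \<partial>distr lborel borel (\<lambda>x. s *\<^sub>R x))"
    using f by (subst nn_integral_density) auto
  also have "\<dots> = (\<integral>\<^sup>+x. ennreal (\<bar>s\<bar>^CARD('n)) * f (s *\<^sub>R x) \<partial>lborel)"
    using f by (subst nn_integral_distr) auto
  also have "\<dots> = ennreal (\<bar>s\<bar> ^ CARD('n)) * (\<integral>\<^sup>+x. f (s *\<^sub>R x) \<partial>lborel)"
    using f by (subst nn_integral_cmult) auto
  finally show ?thesis .
qed

lemma nn_scale':
  fixes f :: "real^'n::finite \<Rightarrow> ennreal"
  assumes s: "s \<noteq> 0" and f: "f \<in> borel_measurable borel"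
  shows "(\<integral>\<^sup>+x. f (s *\<^sub>R x) \<partial>lborel) = ennreal (1 / \<bar>s\<bar> ^ CARD('n)) * (\<integral>\<^sup>+x. f x \<partial>lborel)"
proof -
  have p: "\<bar>s\<bar> ^ CARD('n) > 0" using s by simp
  have "ennreal (1 / \<bar>s\<bar> ^ CARD('n)) * (\<integral>\<^sup>+x. f x \<partial>lborel)
     = (ennreal (1 / \<bar>s\<bar> ^ CARD('n)) * ennreal (\<bar>s\<bar> ^ CARD('n))) * (\<integral>\<^sup>+x. f (s *\<^sub>R x) \<partial>lborel)"
    by (subst nn_scale[OF s f]) (simp add: mult.assoc)
  also have "ennreal (1 / \<bar>s\<bar> ^ CARD('n)) * ennreal (\<bar>s\<bar> ^ CARD('n)) = 1"
    using p by (simp add: ennreal_mult[symmetric])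
  finally show ?thesis by simp
qed

lemma grad_scale:
  fixes u :: "real^'n::finite \<Rightarrow> real"
  assumes "Ck 1 u"
  shows "grad (\<lambda>x. u (s *\<^sub>R x)) x = s *\<^sub>R grad u (s *\<^sub>R x)"
proof -
  have "\<And>i. iterpartial [i] (\<lambda>x. u (s *\<^sub>R x)) = (\<lambda>x. s^length [i] * iterpartial [i] u (s *\<^sub>R x))"
  proof (intro iter_scale allI impI)
    fix i and js :: "'n list" and j :: 'n and x assume "length js < length [i::'n]"
    then have "js = []" by simp
    then show "dirline j (iterpartial js u) x differentiable (at 0)"
      using assms unfolding Ck_def by (drule_tac x="[]" in spec) auto
  qed
  then have "\<And>i. partial i (\<lambda>x. u (s *\<^sub>R x)) x = s * partial i u (s *\<^sub>R x)"
    by (metis iterpartial.simps length_Cons list.size(3) power_one_right One_nat_def)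
  then show ?thesis unfolding grad_def by (simp add: vec_eq_iff)
qed

lemma laplacian_scale:
  assumes "Ck 2 u"
  shows "laplacian (\<lambda>x. u (s *\<^sub>R x)) x = s^2 * laplacian u (s *\<^sub>R x)"
proof -
  have "\<And>i. iterpartial [i,i] (\<lambda>x. u (s *\<^sub>R x)) = (\<lambda>x. s^length [i,i] * iterpartial [i,i] u (s *\<^sub>R x))"
    using assms unfolding Ck_def by (intro iter_scale) auto
  then have "\<And>i. partial i (partial i (\<lambda>x. u (s *\<^sub>R x))) x = s^2 * partial i (partial i u) (s *\<^sub>R x)"
    by (metis iterpartial.simps length_Cons list.size(3) numeral_2_eq_2 One_nat_def)
  then show ?thesis unfolding laplacian_def by (simp add: sum_distrib_left)
qed

lemma grad_cont:
  assumes "Ck 1 u"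
  shows "continuous_on UNIV (grad u)"
proof -
  have "\<And>i. continuous_on UNIV (iterpartial [i] u)" using assms unfolding Ck_def
    by (drule_tac x="[i]" in spec) auto
  then have "\<And>i. continuous_on UNIV (partial i u)" by simp
  then show ?thesis unfolding grad_def by (intro continuous_on_vec_lambda)
qed

lemma grad_meas:
  assumes "Ck 1 u"
  shows "grad u \<in> borel_measurable borel"
  using grad_cont[OF assms] by (intro borel_measurable_continuous_onI)

lemma Ck_cont:
  assumes "Ck k u" shows "continuous_on UNIV u"
  using assms unfolding Ck_def by (metis iterpartial.simps(1) list.size(3) zero_le)

lemma dirichlet_scale:
  assumes "Ck 1 u" and s: "s \<noteq> 0"
  shows "dirichlet (\<lambda>x. u (s *\<^sub>R x)) = s^2 / \<bar>s\<bar>^CARD('n) * dirichlet (u :: real^'n::finite \<Rightarrow> real)"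
proof -
  have m[measurable]: "grad u \<in> borel_measurable borel" by (rule grad_meas[OF assms(1)])
  have m2[measurable]: "grad (\<lambda>x. u (s *\<^sub>R x)) \<in> borel_measurable borel"
    by (rule grad_meas[OF Ck_scale[OF assms(1)]])
  have "dirichlet (\<lambda>x. u (s *\<^sub>R x)) = enn2real (\<integral>\<^sup>+x. ennreal ((norm (grad (\<lambda>x. u (s *\<^sub>R x)) x))\<^sup>2) \<partial>lborel)"
    unfolding dirichlet_def by (rule integral_eq_nn_integral) auto
  also have "(\<integral>\<^sup>+x. ennreal ((norm (grad (\<lambda>x. u (s *\<^sub>R x)) x))\<^sup>2) \<partial>lborel)
     = (\<integral>\<^sup>+x. ennreal (s^2) * ennreal ((norm (grad u (s *\<^sub>R x)))\<^sup>2) \<partial>lborel)"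
    by (simp add: grad_scale[OF assms(1)] power_mult_distrib ennreal_mult)
  also have "\<dots> = ennreal (s^2) * (\<integral>\<^sup>+x. ennreal ((norm (grad u (s *\<^sub>R x)))\<^sup>2) \<partial>lborel)"
    by (rule nn_integral_cmult) measurable
  also have "(\<integral>\<^sup>+x. ennreal ((norm (grad u (s *\<^sub>R x)))\<^sup>2) \<partial>lborel)
     = ennreal (1 / \<bar>s\<bar> ^ CARD('n)) * (\<integral>\<^sup>+x. ennreal ((norm (grad u x))\<^sup>2) \<partial>lborel)"
    by (rule nn_scale'[OF s, where f="\<lambda>x. ennreal ((norm (grad u x))\<^sup>2)"]) measurable
  also have "dirichlet u = enn2real (\<integral>\<^sup>+x. ennreal ((norm (grad u x))\<^sup>2) \<partial>lborel)"
    unfolding dirichlet_def by (rule integral_eq_nn_integral) auto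
  ultimately show ?thesis
    by (simp add: enn2real_mult)
qed


lemma D12_scale:
  fixes u :: "real^'n::finite \<Rightarrow> real"
  assumes D: "D12 u" and cu: "continuous_on UNIV u" and s: "s \<noteq> 0"
  shows "D12 (\<lambda>x. u (s *\<^sub>R x))"
proof -
  obtain \<phi> :: "nat \<Rightarrow> real^'n \<Rightarrow> real" where
    sm: "\<And>k. smooth (\<phi> k)" and cp: "\<And>k. compact (closure {x. \<phi> k x \<noteq> 0})" and
    cau: "\<forall>e>0. \<exists>K. \<forall>k\<ge>K. \<forall>m\<ge>K.
        (\<integral>\<^sup>+x. ennreal ((norm (grad (\<phi> k) x - grad (\<phi> m) x))\<^sup>2) \<partial>lborel) < ennreal e" and
    lim: "(\<lambda>k. \<integral>\<^sup>+x. ennreal (\<bar>\<phi> k x - u x\<bar> powr (2 * real CARD('n) / (real CARD('n) - 2))) \<partial>lborel)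
        \<longlonglongrightarrow> 0"
    using D unfolding D12_def by blast
  define \<psi> where "\<psi> k = (\<lambda>x. \<phi> k (s *\<^sub>R x))" for k
  define p where "p = 2 * real CARD('n) / (real CARD('n) - 2)"
  define c where "c = s^2 / \<bar>s\<bar>^CARD('n)"
  have cpos: "c > 0" using s by (simp add: c_def)
  have C1: "\<And>k. Ck 1 (\<phi> k)" using sm unfolding smooth_def by blast
  have [measurable]: "\<And>k. grad (\<phi> k) \<in> borel_measurable borel" using grad_meas[OF C1] .
  have [measurable]: "\<And>k. \<phi> k \<in> borel_measurable borel"
    using Ck_cont[OF C1] by (intro borel_measurable_continuous_onI)
  have [measurable]: "u \<in> borel_measurable borel" using cu by (intro borel_measurable_continuous_onI)
  have "\<forall>k. smooth (\<psi> k)" unfolding \<psi>_def smooth_def using sm Ck_scale unfolding smooth_def by blast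
  moreover have "\<forall>k. compact (closure {x. \<psi> k x \<noteq> 0})"
  proof
    fix k
    have "bounded {x. \<phi> k x \<noteq> 0}" using cp compact_closure by blast
    then have "bounded ((*\<^sub>R) (1/s) ` {x. \<phi> k x \<noteq> 0})" by (rule bounded_scaling)
    moreover have "{x. \<psi> k x \<noteq> 0} \<subseteq> (*\<^sub>R) (1/s) ` {x. \<phi> k x \<noteq> 0}"
    proof
      fix x assume "x \<in> {x. \<psi> k x \<noteq> 0}"
      then have "s *\<^sub>R x \<in> {x. \<phi> k x \<noteq> 0}" "x = (1/s) *\<^sub>R (s *\<^sub>R x)" using s by (auto simp: \<psi>_def)
      then show "x \<in> (*\<^sub>R) (1/s) ` {x. \<phi> k x \<noteq> 0}" by blast
    qed
    ultimately have "bounded {x. \<psi> k x \<noteq> 0}" by (rule bounded_subset)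
    then show "compact (closure {x. \<psi> k x \<noteq> 0})" using compact_closure by blast
  qed
  moreover have "\<forall>e>0. \<exists>K. \<forall>k\<ge>K. \<forall>m\<ge>K.
        (\<integral>\<^sup>+x. ennreal ((norm (grad (\<psi> k) x - grad (\<psi> m) x))\<^sup>2) \<partial>lborel) < ennreal e"
  proof (intro allI impI)
    fix e :: real assume e: "e > 0"
    then obtain K where K: "\<And>k m. k \<ge> K \<Longrightarrow> m \<ge> K \<Longrightarrow>
        (\<integral>\<^sup>+x. ennreal ((norm (grad (\<phi> k) x - grad (\<phi> m) x))\<^sup>2) \<partial>lborel) < ennreal (e / c)"
      using cau cpos by (meson divide_pos_pos)
    show "\<exists>K. \<forall>k\<ge>K. \<forall>m\<ge>K.
        (\<integral>\<^sup>+x. ennreal ((norm (grad (\<psi> k) x - grad (\<psi> m) x))\<^sup>2) \<partial>lborel) < ennreal e"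
    proof (intro exI allI impI)
      fix k m assume km: "k \<ge> K" "m \<ge> K"
      have "(\<integral>\<^sup>+x. ennreal ((norm (grad (\<psi> k) x - grad (\<psi> m) x))\<^sup>2) \<partial>lborel)
          = (\<integral>\<^sup>+x. ennreal (s^2) * ennreal ((norm (grad (\<phi> k) (s *\<^sub>R x) - grad (\<phi> m) (s *\<^sub>R x)))\<^sup>2) \<partial>lborel)"
        unfolding \<psi>_def grad_scale[OF C1] scaleR_diff_right[symmetric]
        by (simp add: power_mult_distrib ennreal_mult)
      also have "\<dots> = ennreal (s^2) * (\<integral>\<^sup>+x. ennreal ((norm (grad (\<phi> k) (s *\<^sub>R x) - grad (\<phi> m) (s *\<^sub>R x)))\<^sup>2) \<partial>lborel)"
        by (rule nn_integral_cmult) measurable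
      also have "(\<integral>\<^sup>+x. ennreal ((norm (grad (\<phi> k) (s *\<^sub>R x) - grad (\<phi> m) (s *\<^sub>R x)))\<^sup>2) \<partial>lborel)
          = ennreal (1 / \<bar>s\<bar> ^ CARD('n)) * (\<integral>\<^sup>+x. ennreal ((norm (grad (\<phi> k) x - grad (\<phi> m) x))\<^sup>2) \<partial>lborel)"
        by (rule nn_scale'[OF s, where f="\<lambda>x. ennreal ((norm (grad (\<phi> k) x - grad (\<phi> m) x))\<^sup>2)"]) measurable
      also have "ennreal (s^2) * (ennreal (1 / \<bar>s\<bar> ^ CARD('n)) * (\<integral>\<^sup>+x. ennreal ((norm (grad (\<phi> k) x - grad (\<phi> m) x))\<^sup>2) \<partial>lborel))
          = ennreal c * (\<integral>\<^sup>+x. ennreal ((norm (grad (\<phi> k) x - grad (\<phi> m) x))\<^sup>2) \<partial>lborel)"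
        by (simp add: c_def mult.assoc[symmetric] ennreal_mult[symmetric])
      also have "\<dots> < ennreal c * ennreal (e / c)"
        using K[OF km] cpos by (intro ennreal_mult_strict_left_mono) auto
      also have "\<dots> = ennreal (c * (e / c))" using cpos e by (subst ennreal_mult) auto
      also have "\<dots> = ennreal e" using cpos by simp
      finally show "(\<integral>\<^sup>+x. ennreal ((norm (grad (\<psi> k) x - grad (\<psi> m) x))\<^sup>2) \<partial>lborel) < ennreal e" .
    qed
  qed
  moreover have "(\<lambda>k. \<integral>\<^sup>+x. ennreal (\<bar>\<psi> k x - u (s *\<^sub>R x)\<bar> powr p) \<partial>lborel) \<longlonglongrightarrow> 0"
  proof -
    have "\<And>k. (\<integral>\<^sup>+x. ennreal (\<bar>\<psi> k x - u (s *\<^sub>R x)\<bar> powr p) \<partial>lborel)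
       = ennreal (1 / \<bar>s\<bar> ^ CARD('n)) * (\<integral>\<^sup>+x. ennreal (\<bar>\<phi> k x - u x\<bar> powr p) \<partial>lborel)"
      unfolding \<psi>_def
      by (rule nn_scale'[OF s, where f="\<lambda>x. ennreal (\<bar>\<phi> k x - u x\<bar> powr p)" for k]) measurable
    moreover have "(\<lambda>k. ennreal (1 / \<bar>s\<bar> ^ CARD('n)) * (\<integral>\<^sup>+x. ennreal (\<bar>\<phi> k x - u x\<bar> powr p) \<partial>lborel))
        \<longlonglongrightarrow> ennreal (1 / \<bar>s\<bar> ^ CARD('n)) * 0"
      using lim unfolding p_def by (intro ennreal_tendsto_cmult) auto
    ultimately show ?thesis by simp
  qed
  ultimately show ?thesis unfolding D12_def p_def by blast
qed


lemma A1:
  fixes r a b d :: real and N :: nat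
  assumes rpos: "r > 0"
  shows "(1/r)^2 * a + ((1/r)^4 / (1/r)^N) * b * (r^2 / r^N * d) = (a + b * d) / r^2"
proof -
  have "(1/r)^4 / (1/r)^N * (r^2 / r^N) = 1 / r^2"
    using rpos by (simp add: power_one_over power2_eq_square power4_eq_xxxx)
  then show ?thesis using rpos by (simp add: field_simps)
qed

lemma A2:
  fixes t a b d :: real and N :: nat
  shows "(a + b * (t^2 / t^N * d)) * t^2 = t^2 * a + t^4 / t^N * b * d"
proof -
  have "t^4 = t^2 * t^2" by (simp add: power4_eq_xxxx power2_eq_square)
  then show ?thesis by (simp add: algebra_simps)
qed

lemma dirichlet_nonneg: "dirichlet u \<ge> 0"
  unfolding dirichlet_def by (rule integral_nonneg_AE) simp

lemma Ck_mono:
  assumes "Ck m u" "k \<le> m" shows "Ck k u"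
  using assms unfolding Ck_def by (meson le_trans less_le_trans)

theorem theorem1p1:
  fixes a b :: real and g :: "real \<Rightarrow> real" and u :: "real^'n::finite \<Rightarrow> real"
  assumes "CARD('n) \<ge> 3" and "a > 0" and "b > 0" and "continuous_on UNIV g"
    and "Ck 2 u" and "D12 u"
  shows "(\<forall>x. - (a + b * dirichlet u) * laplacian u x = g (u x)) \<longleftrightarrow>
         (\<exists>(v :: real^'n \<Rightarrow> real) t. Ck 2 v \<and> D12 v \<and> (\<forall>x. - laplacian v x = g (v x)) \<and>
            t > 0 \<and> t\<^sup>2 * a + t powr (4 - real CARD('n)) * b * dirichlet v = 1 \<and>
            (\<forall>x. u x = v (t *\<^sub>R x)))"
proof
  assume eq: "\<forall>x. - (a + b * dirichlet u) * laplacian u x = g (u x)"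
  define c where "c = a + b * dirichlet u"
  have cpos: "c > 0" using assms dirichlet_nonneg[of u] unfolding c_def
    by (simp add: add_pos_nonneg)
  define r where "r = sqrt c"
  have rpos: "r > 0" using cpos by (simp add: r_def)
  have r2: "r^2 = c" using cpos by (simp add: r_def)
  define v where "v = (\<lambda>y. u (r *\<^sub>R y))"
  define t where "t = 1 / r"
  have tpos: "t > 0" using rpos by (simp add: t_def)
  have C1: "Ck 1 u" using Ck_mono[OF assms(5)] by simp
  have "Ck 2 v" unfolding v_def by (rule Ck_scale[OF assms(5)])
  moreover have "D12 v" unfolding v_def
    by (rule D12_scale[OF assms(6) Ck_cont[OF assms(5)]]) (use rpos in simp)
  moreover have "\<forall>x. - laplacian v x = g (v x)"
  proof
    fix x
    have "- laplacian v x = - c * laplacian u (r *\<^sub>R x)"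
      unfolding v_def laplacian_scale[OF assms(5)] r2 by simp
    also have "\<dots> = g (v x)" using eq unfolding c_def v_def by simp
    finally show "- laplacian v x = g (v x)" .
  qed
  moreover have "t\<^sup>2 * a + t powr (4 - real CARD('n)) * b * dirichlet v = 1"
  proof -
    have dv: "dirichlet v = r^2 / r^CARD('n) * dirichlet u"
      unfolding v_def using dirichlet_scale[OF C1, of r] rpos by simp
    have tp: "t powr (4 - real CARD('n)) = t^4 / t^CARD('n)"
      proof -
    have "t powr (4 - real CARD('n)) = t powr (real 4) / t powr real CARD('n)"
      by (simp add: powr_diff)
    also have "\<dots> = t^4 / t^CARD('n)" by (simp only: powr_realpow[OF tpos])
    finally show ?thesis .
  qed
    have rN: "r^CARD('n) > 0" using rpos by simp
    have "t\<^sup>2 * a + t powr (4 - real CARD('n)) * b * dirichlet v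
        = (a + b * dirichlet u) / r^2"
      unfolding tp dv unfolding t_def using A1[OF rpos, of a "CARD('n)" b "dirichlet u"] .
    then show ?thesis using r2 cpos unfolding c_def by simp
  qed
  moreover have "\<forall>x. u x = v (t *\<^sub>R x)" using rpos by (simp add: v_def t_def)
  ultimately show "\<exists>(v :: real^'n \<Rightarrow> real) t. Ck 2 v \<and> D12 v \<and> (\<forall>x. - laplacian v x = g (v x)) \<and>
            t > 0 \<and> t\<^sup>2 * a + t powr (4 - real CARD('n)) * b * dirichlet v = 1 \<and>
            (\<forall>x. u x = v (t *\<^sub>R x))" using tpos by blast
next
  assume "\<exists>(v :: real^'n \<Rightarrow> real) t. Ck 2 v \<and> D12 v \<and> (\<forall>x. - laplacian v x = g (v x)) \<and>
            t > 0 \<and> t\<^sup>2 * a + t powr (4 - real CARD('n)) * b * dirichlet v = 1 \<and>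
            (\<forall>x. u x = v (t *\<^sub>R x))"
  then obtain v :: "real^'n \<Rightarrow> real" and t where v2: "Ck 2 v" and ve: "\<forall>x. - laplacian v x = g (v x)"
    and tpos: "t > 0" and tc: "t\<^sup>2 * a + t powr (4 - real CARD('n)) * b * dirichlet v = 1"
    and uv: "\<forall>x. u x = v (t *\<^sub>R x)" by blast
  have ueq: "u = (\<lambda>x. v (t *\<^sub>R x))" using uv by auto
  have C1: "Ck 1 v" using Ck_mono[OF v2] by simp
  have du: "dirichlet u = t^2 / t^CARD('n) * dirichlet v"
    unfolding ueq using dirichlet_scale[OF C1, of t] tpos by simp
  have tp: "t powr (4 - real CARD('n)) = t^4 / t^CARD('n)"
    proof -
    have "t powr (4 - real CARD('n)) = t powr (real 4) / t powr real CARD('n)"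
      by (simp add: powr_diff)
    also have "\<dots> = t^4 / t^CARD('n)" by (simp only: powr_realpow[OF tpos])
    finally show ?thesis .
  qed
  have key: "(a + b * dirichlet u) * t^2 = 1"
  proof -
    have "(a + b * dirichlet u) * t^2 = t\<^sup>2 * a + t powr (4 - real CARD('n)) * b * dirichlet v"
      unfolding du tp using A2[of a b t "CARD('n)" "dirichlet v"] .
    then show ?thesis using tc by simp
  qed
  show "\<forall>x. - (a + b * dirichlet u) * laplacian u x = g (u x)"
  proof
    fix x
    have "- (a + b * dirichlet u) * laplacian u x = - ((a + b * dirichlet u) * t^2) * laplacian v (t *\<^sub>R x)"
      unfolding ueq laplacian_scale[OF v2] by (simp add: algebra_simps)
    also have "\<dots> = g (u x)" unfolding key using ve uv by simp
    finally show "- (a + b * dirichlet u) * laplacian u x = g (u x)" .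
  qed
qed

end
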